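(* Let $N_1\ge N_2$, $N_3$, $T$ be nonnegative integers with $T\ge N_1+N_3$. For $i\in\{1,2\}$ let $\tilde T_i$ be a maximizer over $T'\in\{N_i,\dots,T-N_3\}$ of $\min\left(\frac{T'+1-N_i}{T'+1},\frac{T-T'+1-N_3}{T-T'+1}\right)$. For all positive integers $A,B$, set $$k_1=A(T-\tilde T_1+1-N_3)(\tilde T_1+1-N_1),\quad k_2=B(T-\tilde T_2+1-N_3)(\tilde T_2+1-N_2),$$ $$n=\max\Big(A(\tilde T_1+1)(T-\tilde T_1+1-N_3),\;B(\tilde T_2+1)(T-\tilde T_2+1-N_3),\;A(T-\tilde T_1+1)(\tilde T_1+1-N_1)+B(T-\tilde T_2+1)(\tilde T_2+1-N_2)\Big).$$ Then the rate pair $(R_1,R_2)=(k_1/n,\,k_2/n)$ is achievable.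
   Context: Network: two sources, one relay, one destination; no direct source–destination link. Source $i\in\{1,2\}$ has messages $s_{t,i}\in\mathbb{F}^{k_i}$, $t\ge0$, over a finite field $\mathbb{F}$. A time-invariant $(n_1,n_2,n_3,k_1,k_2,T)_{\mathbb{F}}$ streaming code (unbounded memory): source $i$ sends at time $t$ a packet $x^{(1)}_{t,i}\in\mathbb{F}^{n_i}$, a fixed function of $s_{0,i},\dots,s_{t,i}$; a relay function $g$, the same at every time $t$, takes the packets received from both sources at times $t-T,\dots,t$ together with the relay's previously produced estimates of past source messages, and outputs a packet $x^{(2)}_t\in\mathbb{F}^{n_3}$ and estimates of $s_{t-T,1},s_{t-T,2}$; the destination outputs at time $t+T$ estimates $\hat s_{t,i}$ from its received packets up to time $t+T$. Each link is a packet erasure channel (received packet is the sent one or the erasure symbol $*$). An $N$-erasure sequence has exactly $N$ erased times; link source $i\to$relay suffers an arbitrary $N_i$-erasure sequence, relay$\to$destination an arbitrary $N_3$-erasure sequence. The code is $(N_1,N_2,N_3)$-achievable if $\hat s_{t,i}=s_{t,i}$ always. Rate pair: $R_i=k_i/n$, $n=\max(n_1,n_2,n_3)$; a rate pair is achievable if it is the rate pair of some $(N_1,N_2,N_3)$-achievable code (over some finite field). *)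

theory Defs
  imports "HOL-Algebra.Ring" Complex_Main
begin

text \<open>Symbols of the finite field F are elements of carrier F, where F :: nat ring
  (every finite field is isomorphic to one whose carrier is a set of naturals).
  A received packet is an option: None is the erasure symbol *.\<close>

type_synonym vec = "nat list"
type_synonym rx = "vec option"

definition vecs :: "nat ring \<Rightarrow> nat \<Rightarrow> vec set" where
  "vecs F k = {v. length v = k \<and> set v \<subseteq> carrier F}"

text \<open>Relay function g: input = window of packets received from (source 1, source 2) at
  times t-T,...,t (entry None stands for a time before 0, i.e. nonexistent),
  and the list of the relay's previous estimates (of s_{0}, ..., s_{t-1-T});
  output = (relay packet x^(2)_t, estimate of s_{t-T,1}, estimate of s_{t-T,2}).\<close>

type_synonym relay_fn = "(rx \<times> rx) option list \<Rightarrow> (vec \<times> vec) list \<Rightarrow> vec \<times> vec \<times> vec"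

primrec relay_hist :: "relay_fn \<Rightarrow> nat \<Rightarrow> (nat \<Rightarrow> (rx \<times> rx) option list) \<Rightarrow> nat
    \<Rightarrow> (vec \<times> vec \<times> vec) list" where
  "relay_hist g T W 0 = []"
| "relay_hist g T W (Suc t) =
     relay_hist g T W t @ [g (W t) (map snd (drop T (relay_hist g T W t)))]"

definition src_rx :: "(vec list \<Rightarrow> vec) \<Rightarrow> (nat \<Rightarrow> vec) \<Rightarrow> nat set \<Rightarrow> nat \<Rightarrow> rx" where
  "src_rx enc s E tau = (if tau \<in> E then None else Some (enc (map s [0..<Suc tau])))"

definition relay_window :: "nat \<Rightarrow> (nat \<Rightarrow> rx) \<Rightarrow> (nat \<Rightarrow> rx) \<Rightarrow> nat \<Rightarrow> (rx \<times> rx) option list" where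
  "relay_window T y1 y2 t =
     map (\<lambda>j. if T \<le> t + j then Some (y1 (t + j - T), y2 (t + j - T)) else None) [0..<Suc T]"

definition achievable_code ::
  "nat ring \<Rightarrow> nat \<Rightarrow> nat \<Rightarrow> nat \<Rightarrow> nat \<Rightarrow> nat \<Rightarrow> nat \<Rightarrow>
   (vec list \<Rightarrow> vec) \<Rightarrow> (vec list \<Rightarrow> vec) \<Rightarrow> relay_fn \<Rightarrow> (rx list \<Rightarrow> vec \<times> vec) \<Rightarrow>
   nat \<Rightarrow> nat \<Rightarrow> nat \<Rightarrow> bool" where
  "achievable_code F n1 n2 n3 k1 k2 T enc1 enc2 g dec N1 N2 N3 \<longleftrightarrow>
     (\<forall>ms. enc1 ms \<in> vecs F n1) \<and> (\<forall>ms. enc2 ms \<in> vecs F n2) \<and>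
     (\<forall>w es. fst (g w es) \<in> vecs F n3) \<and>
     (\<forall>s1 s2 E1 E2 E3.
        (\<forall>t. s1 t \<in> vecs F k1) \<longrightarrow> (\<forall>t. s2 t \<in> vecs F k2) \<longrightarrow>
        finite E1 \<longrightarrow> card E1 = N1 \<longrightarrow> finite E2 \<longrightarrow> card E2 = N2 \<longrightarrow>
        finite E3 \<longrightarrow> card E3 = N3 \<longrightarrow>
        (let W = relay_window T (src_rx enc1 s1 E1) (src_rx enc2 s2 E2);
             x2 = (\<lambda>tau. fst (relay_hist g T W (Suc tau) ! tau));
             y = (\<lambda>tau. if tau \<in> E3 then None else Some (x2 tau))
         in \<forall>t. dec (map y [0..<Suc (t + T)]) = (s1 t, s2 t)))"

definition achievable_rate_pair :: "nat \<Rightarrow> nat \<Rightarrow> nat \<Rightarrow> nat \<Rightarrow> real \<Rightarrow> real \<Rightarrow> bool" where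
  "achievable_rate_pair N1 N2 N3 T R1 R2 \<longleftrightarrow>
     (\<exists>(F :: nat ring) n1 n2 n3 k1 k2 enc1 enc2 g dec.
        field F \<and> finite (carrier F) \<and>
        achievable_code F n1 n2 n3 k1 k2 T enc1 enc2 g dec N1 N2 N3 \<and>
        R1 = real k1 / real (max n1 (max n2 n3)) \<and>
        R2 = real k2 / real (max n1 (max n2 n3)))"

definition tobj :: "nat \<Rightarrow> nat \<Rightarrow> nat \<Rightarrow> nat \<Rightarrow> real" where
  "tobj T N N3 T' = min ((real T' + 1 - real N) / (real T' + 1))
                        ((real T - real T' + 1 - real N3) / (real T - real T' + 1))"

definition is_tmax :: "nat \<Rightarrow> nat \<Rightarrow> nat \<Rightarrow> nat \<Rightarrow> bool" where
  "is_tmax T N N3 Tt \<longleftrightarrow> Tt \<in> {N..T - N3} \<and> (\<forall>T'\<in>{N..T - N3}. tobj T N N3 T' \<le> tobj T N N3 Tt)"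

end

theory Submission
  imports Defs "HOL-Number_Theory.Residues" "HOL-Algebra.QuotRing" "HOL-Computational_Algebra.Polynomial" "HOL-Computational_Algebra.Primes"
begin

definition gfp :: "nat \<Rightarrow> nat ring" where
 "gfp p = \<lparr>carrier = {0..<p}, monoid.mult = (\<lambda>x y. (x*y) mod p), one = 1, zero = 0, add = (\<lambda>x y. (x+y) mod p)\<rparr>"

lemma gfp_field: assumes "prime p" shows "field (gfp p)"
proof -
  have p1: "p > 1" using assms prime_gt_1_nat by blast
  have R: "field (residue_ring (int p))" using residues_prime.is_field[of p] assms
    by (simp add: residues_prime_def)
  have "nat \<in> ring_iso (residue_ring (int p)) (gfp p)"
  proof (rule ring_iso_memI)
    show "\<And>x. x \<in> carrier (residue_ring (int p)) \<Longrightarrow> nat x \<in> carrier (gfp p)"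
      by (auto simp: residue_ring_def gfp_def)
    show "\<And>x y. x \<in> carrier (residue_ring (int p)) \<Longrightarrow> y \<in> carrier (residue_ring (int p)) \<Longrightarrow>
      nat (x \<otimes>\<^bsub>residue_ring (int p)\<^esub> y) = nat x \<otimes>\<^bsub>gfp p\<^esub> nat y"
      by (auto simp: residue_ring_def gfp_def nat_mod_distrib nat_mult_distrib)
    show "\<And>x y. x \<in> carrier (residue_ring (int p)) \<Longrightarrow> y \<in> carrier (residue_ring (int p)) \<Longrightarrow>
      nat (x \<oplus>\<^bsub>residue_ring (int p)\<^esub> y) = nat x \<oplus>\<^bsub>gfp p\<^esub> nat y"
      by (auto simp: residue_ring_def gfp_def nat_mod_distrib nat_add_distrib)
    show "nat \<one>\<^bsub>residue_ring (int p)\<^esub> = \<one>\<^bsub>gfp p\<^esub>"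
      by (auto simp: residue_ring_def gfp_def)
    show "bij_betw nat (carrier (residue_ring (int p))) (carrier (gfp p))"
      unfolding bij_betw_def residue_ring_def gfp_def inj_on_def
      apply auto
      by (metis atLeastAtMost_iff image_eqI int_ops(1) less_imp_of_nat_less nat_int of_nat_0_le_iff of_nat_less_imp_less zle_diff1_eq)
  qed
  from field.ring_iso_imp_img_field[OF R this]
  show ?thesis by (simp add: residue_ring_def gfp_def)
qed

lemma root_lemma:
  fixes p :: int and X :: "int set"
  assumes "prime p" "finite X" "\<forall>x\<in>X. 0 \<le> x \<and> x < p" "degree Q < card X" "\<forall>x\<in>X. p dvd poly Q x"
  shows "\<forall>i. p dvd coeff Q i"
  using assms(2,3,4,5)
proof (induction X arbitrary: Q rule: finite_induct)
  case empty then show ?case by simp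
next
  case (insert x0 X)
  show ?case
  proof (cases "X = {}")
    case True
    then have "degree Q = 0" using insert by simp
    then have "Q = [:coeff Q 0:]" by (metis degree_0_id)
    moreover have "p dvd poly Q x0" using insert by simp
    ultimately show ?thesis
      by (metis coeff_pCons_0 coeff_pCons_Suc dvd_0_right not0_implies_Suc pCons_0_0 coeff_0 poly_pCons poly_0 mult_zero_right add_0_right)
  next
    case False
    define R where "R = synthetic_div Q x0"
    have eq: "Q = [:-x0,1:] * R + [:poly Q x0:]" unfolding R_def using synthetic_div_correct' by metis
    have cX: "card X > 0" using False insert by auto
    have "degree R < card X" unfolding R_def degree_synthetic_div using insert.prems(2) insert.hyps cX by simp
    moreover have "\<forall>x\<in>X. p dvd poly R x"
    proof
      fix x assume x: "x \<in> X"
      have "poly Q x = (x - x0) * poly R x + poly Q x0"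
        by (subst eq) (simp add: algebra_simps)
      then have "p dvd (x - x0) * poly R x" using insert x
        by (metis add_diff_cancel_right' dvd_diff insert_iff)
      moreover have "\<not> p dvd (x - x0)"
      proof
        assume "p dvd (x - x0)"
        moreover have "x - x0 \<noteq> 0" using x insert by auto
        ultimately have "\<bar>p\<bar> \<le> \<bar>x - x0\<bar>" using dvd_imp_le_int by blast
        moreover have "\<bar>x - x0\<bar> < p" using x insert by auto
        ultimately show False by simp
      qed
      ultimately show "p dvd poly R x" using assms(1) prime_dvd_mult_iff by blast
    qed
    ultimately have IH: "\<forall>i. p dvd coeff R i" using insert by auto
    have e2: "[:-x0,1:] * R = smult (-x0) R + pCons 0 R" by simp
    show ?thesis
    proof
      fix i
      have "coeff Q i = - x0 * coeff R i + coeff (pCons 0 R) i + coeff [:poly Q x0:] i"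
        by (subst eq) (simp add: e2)
      moreover have "p dvd coeff (pCons 0 R) i" using IH by (cases i) auto
      moreover have "p dvd coeff [:poly Q x0:] i" using insert by (cases i) auto
      ultimately show "p dvd coeff Q i" using IH by simp
    qed
  qed
qed

lemma degree_Poly_lt: "xs \<noteq> [] \<Longrightarrow> degree (Poly xs) < length xs"
proof -
  assume "xs \<noteq> []"
  have "degree (Poly xs) \<le> length xs - 1" by (rule degree_le) (auto simp: nth_default_def)
  then show ?thesis using \<open>xs \<noteq> []\<close> by (cases xs) auto
qed

definition senc :: "nat \<Rightarrow> nat \<Rightarrow> nat list \<Rightarrow> nat list" where
  "senc p n c = map (\<lambda>x. nat (poly (Poly (map int c)) (int x) mod int p)) [0..<n]"

lemma senc_inj:
  assumes "prime p" "n \<le> p" "length c = k" "length d = k" "set c \<subseteq> {..<p}" "set d \<subseteq> {..<p}"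
    "S \<subseteq> {..<n}" "k \<le> card S" "\<forall>j\<in>S. senc p n c ! j = senc p n d ! j"
  shows "c = d"
proof (cases "k = 0")
  case True then show ?thesis using assms by simp
next
  case False
  have fS: "finite S" using assms(7) finite_subset by blast
  obtain S' where S': "S' \<subseteq> S" "card S' = k" using obtain_subset_with_card_n[OF assms(8)] by metis
  define X where "X = int ` S'"
  define Q where "Q = Poly (map int c) - Poly (map int d)"
  have pp: "prime (int p)" using assms(1) by simp
  have p0: "int p > 0" using assms(1) prime_gt_0_nat by simp
  have fX: "finite X" unfolding X_def using S' fS finite_subset by blast
  have cX: "card X = k" unfolding X_def using S' by (simp add: card_image)
  have rX: "\<forall>x\<in>X. 0 \<le> x \<and> x < int p" unfolding X_def using S' assms(7,2) by auto
  have "degree (Poly (map int c)) < k" using False assms(3) degree_Poly_lt[of "map int c"] by auto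
  moreover have "degree (Poly (map int d)) < k" using False assms(4) degree_Poly_lt[of "map int d"] by auto
  ultimately have dQ: "degree Q < card X" unfolding Q_def cX
    by (meson degree_diff_le_max le_less_trans max_less_iff_conj)
  have vX: "\<forall>x\<in>X. int p dvd poly Q x"
  proof
    fix x assume "x \<in> X"
    then obtain j where j: "j \<in> S" "x = int j" unfolding X_def using S' by auto
    have jn: "j < n" using j assms(7) by auto
    have "nat (poly (Poly (map int c)) (int j) mod int p) = nat (poly (Poly (map int d)) (int j) mod int p)"
      using bspec[OF assms(9) j(1)] jn by (simp add: senc_def)
    then have "poly (Poly (map int c)) (int j) mod int p = poly (Poly (map int d)) (int j) mod int p"
      using p0 by (metis eq_nat_nat_iff pos_mod_sign)
    then show "int p dvd poly Q x" unfolding Q_def j by (simp add: mod_eq_dvd_iff)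
  qed
  have C: "\<forall>i. int p dvd coeff Q i" using root_lemma[OF pp fX rX dQ vX] .
  show ?thesis
  proof (rule nth_equalityI)
    show "length c = length d" using assms by simp
    fix i assume i: "i < length c"
    have "coeff Q i = int (c ! i) - int (d ! i)" unfolding Q_def using i assms(3,4)
      by (simp add: nth_default_def)
    then have "int (c ! i) mod int p = int (d ! i) mod int p" using C[rule_format, of i]
      by (simp add: mod_eq_dvd_iff)
    moreover have "c ! i \<in> set c" "d ! i \<in> set d" using i assms(3,4) by simp_all
    then have "c ! i < p" "d ! i < p" using assms(5,6) by auto
    moreover note this
    moreover have "int (c ! i) mod int p = int (c ! i)" "int (d ! i) mod int p = int (d ! i)"
      using calculation(3,4) by simp_all
    ultimately show "c ! i = d ! i" by simp
  qed
qed

definition chunk :: "nat \<Rightarrow> nat \<Rightarrow> nat list \<Rightarrow> nat list" where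
  "chunk k r c = take k (drop (r * k) c)"

definition benc :: "nat \<Rightarrow> nat \<Rightarrow> nat \<Rightarrow> nat \<Rightarrow> nat list \<Rightarrow> nat list list" where
  "benc p n m k c = map (\<lambda>j. map (\<lambda>r. senc p n (chunk k r c) ! j) [0..<m]) [0..<n]"

lemma length_benc [simp]: "length (benc p n m k c) = n"
  by (simp add: benc_def)

lemma benc_block_length: "j < n \<Longrightarrow> length (benc p n m k c ! j) = m"
  by (simp add: benc_def)

lemma senc_lt: "p > 0 \<Longrightarrow> j < n \<Longrightarrow> senc p n c ! j < p"
  by (simp add: senc_def nat_less_iff)

lemma benc_block_set: "p > 0 \<Longrightarrow> j < n \<Longrightarrow> set (benc p n m k c ! j) \<subseteq> {..<p}"
  by (auto simp add: benc_def senc_lt)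

lemma chunk_length: "length c = k * m \<Longrightarrow> r < m \<Longrightarrow> length (chunk k r c) = k"
proof -
  assume a: "length c = k * m" "r < m"
  have "r * k + k \<le> k * m" using a(2)
    using mult_le_mono1[of "Suc r" m k] by (simp add: algebra_simps)
  then show ?thesis using a(1) by (simp add: chunk_def)
qed

lemma chunk_nth: "length c = k * m \<Longrightarrow> i < k * m \<Longrightarrow> c ! i = chunk k (i div k) c ! (i mod k)"
proof -
  assume a: "length c = k * m" "i < k * m"
  then have k0: "k > 0" by (cases k) auto
  have e: "i div k * k + i mod k = i" by simp
  have "i div k * k \<le> length c" using a e by linarith
  then have "drop (i div k * k) c ! (i mod k) = c ! i" using e by (simp add: nth_drop)
  moreover have "i mod k < k" using k0 by simp
  ultimately show ?thesis by (simp add: chunk_def)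
qed

lemma benc_inj:
  assumes "prime p" "n \<le> p" "length c = k * m" "length d = k * m" "set c \<subseteq> {..<p}" "set d \<subseteq> {..<p}"
    "S \<subseteq> {..<n}" "k \<le> card S" "\<forall>j\<in>S. benc p n m k c ! j = benc p n m k d ! j"
  shows "c = d"
proof -
  have ch: "chunk k r c = chunk k r d" if r: "r < m" for r
  proof (rule senc_inj[OF assms(1,2) chunk_length[OF assms(3) r] chunk_length[OF assms(4) r] _ _ assms(7,8)])
    show "set (chunk k r c) \<subseteq> {..<p}" unfolding chunk_def
      by (rule order_trans[OF set_take_subset order_trans[OF set_drop_subset assms(5)]])
    show "set (chunk k r d) \<subseteq> {..<p}" unfolding chunk_def
      by (rule order_trans[OF set_take_subset order_trans[OF set_drop_subset assms(6)]])
    show "\<forall>j\<in>S. senc p n (chunk k r c) ! j = senc p n (chunk k r d) ! j"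
    proof
      fix j assume j: "j \<in> S"
      then have jn: "j < n" using assms(7) by auto
      have "benc p n m k c ! j ! r = benc p n m k d ! j ! r" using assms(9) j by simp
      then show "senc p n (chunk k r c) ! j = senc p n (chunk k r d) ! j"
        using jn r by (simp add: benc_def)
    qed
  qed
  show ?thesis
  proof (rule nth_equalityI)
    show "length c = length d" using assms(3,4) by simp
    fix i assume "i < length c"
    then have i: "i < k * m" using assms(3) by simp
    then have k0: "k > 0" by (cases k) auto
    have "i div k < m" using i k0 by (simp add: div_less_iff_less_mult mult.commute)
    then show "c ! i = d ! i" using chunk_nth[OF assms(3) i] chunk_nth[OF assms(4) i] ch by simp
  qed
qed

definition bdec :: "nat \<Rightarrow> nat \<Rightarrow> nat \<Rightarrow> nat \<Rightarrow> nat list option list \<Rightarrow> nat list" where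
  "bdec p n m k rs = (SOME c. length c = k * m \<and> set c \<subseteq> {..<p} \<and>
      (\<forall>j<n. \<forall>x. rs ! j = Some x \<longrightarrow> x = benc p n m k c ! j))"

lemma bdec_correct:
  assumes "prime p" "n \<le> p" "length c = k * m" "set c \<subseteq> {..<p}"
    "\<forall>j<n. rs ! j = None \<or> rs ! j = Some (benc p n m k c ! j)"
    "k \<le> card {j. j < n \<and> rs ! j \<noteq> None}"
  shows "bdec p n m k rs = c"
proof -
  let ?P = "\<lambda>c. length c = k * m \<and> set c \<subseteq> {..<p} \<and>
      (\<forall>j<n. \<forall>x. rs ! j = Some x \<longrightarrow> x = benc p n m k c ! j)"
  have Pc3: "\<forall>j<n. \<forall>x. rs ! j = Some x \<longrightarrow> x = benc p n m k c ! j"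
  proof (intro allI impI)
    fix j x assume jx: "j < n" "rs ! j = Some x"
    then have "rs ! j = Some (benc p n m k c ! j)" using assms(5) by auto
    then show "x = benc p n m k c ! j" using jx(2) by simp
  qed
  have Pc: "?P c" using assms(3,4) Pc3 by blast
  then have Pd: "?P (bdec p n m k rs)" unfolding bdec_def by (rule someI)
  show ?thesis
  proof (rule benc_inj[OF assms(1,2) _ assms(3) _ assms(4) _ assms(6)])
    show "length (bdec p n m k rs) = k * m" using Pd by blast
    show "set (bdec p n m k rs) \<subseteq> {..<p}" using Pd by blast
    show "{j. j < n \<and> rs ! j \<noteq> None} \<subseteq> {..<n}" by auto
    show "\<forall>j\<in>{j. j < n \<and> rs ! j \<noteq> None}. benc p n m k (bdec p n m k rs) ! j = benc p n m k c ! j"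
    proof
      fix j assume "j \<in> {j. j < n \<and> rs ! j \<noteq> None}"
      then have j: "j < n" "rs ! j \<noteq> None" by auto
      then have rsj: "rs ! j = Some (benc p n m k c ! j)" using assms(5) by auto
      from Pd have "\<forall>x. rs ! j = Some x \<longrightarrow> x = benc p n m k (bdec p n m k rs) ! j" using j(1) by blast
      from this[rule_format, OF rsj]
      show "benc p n m k (bdec p n m k rs) ! j = benc p n m k c ! j" by simp
    qed
  qed
qed

lemma blk_concat:
  assumes "\<forall>x\<in>set xs. length x = w" "l < length xs"
  shows "take w (drop (l * w) (concat xs)) = xs ! l"
  using assms
proof (induction xs arbitrary: l)
  case Nil then show ?case by simp
next
  case (Cons x xs)
  show ?case
  proof (cases l)
    case 0 then show ?thesis using Cons by simp
  next
    case (Suc l')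
    then have "drop (l * w) (concat (x # xs)) = drop (l' * w) (concat xs)"
      using Cons.prems by (simp add: add.commute)
    then show ?thesis using Cons Suc by simp
  qed
qed

lemma length_concat_const:
  assumes "\<forall>x\<in>set xs. length x = w"
  shows "length (concat xs) = length xs * w"
  using assms by (induction xs) auto

lemma erasure_count:
  assumes "finite E" "card E = N"
  shows "n \<le> card {j. j < n \<and> u + j \<notin> E} + N"
proof -
  have eq: "{..<n} = {j. j < n \<and> u + j \<notin> E} \<union> {j. j < n \<and> u + j \<in> E}" by auto
  have "card {..<n} \<le> card {j. j < n \<and> u + j \<notin> E} + card {j. j < n \<and> u + j \<in> E}"
    by (subst eq) (rule card_Un_le)
  then have "n \<le> card {j. j < n \<and> u + j \<notin> E} + card {j. j < n \<and> u + j \<in> E}"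
    by simp
  moreover have "card {j. j < n \<and> u + j \<in> E} \<le> card E"
  proof -
    have "inj_on (\<lambda>j. u + j) {j. j < n \<and> u + j \<in> E}" by (auto simp: inj_on_def)
    moreover have "(\<lambda>j. u + j) ` {j. j < n \<and> u + j \<in> E} \<subseteq> E" by auto
    ultimately show ?thesis by (rule card_inj_on_le[OF _ _ assms(1)])
  qed
  ultimately show ?thesis using assms(2) by linarith
qed

definition blk :: "nat \<Rightarrow> nat \<Rightarrow> nat list \<Rightarrow> nat list" where
  "blk w l pk = take w (drop (l * w) pk)"

definition src_enc :: "nat \<Rightarrow> nat \<Rightarrow> nat \<Rightarrow> nat \<Rightarrow> nat list list \<Rightarrow> nat list" where
  "src_enc p a w kA ms = concat (map (\<lambda>j. if j < length ms
      then benc p (Suc a) w kA (ms ! (length ms - Suc j)) ! j else replicate w 0) [0..<Suc a])"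

lemma src_enc_blocks:
  "\<forall>x\<in>set (map (\<lambda>j. if j < length ms
      then benc p (Suc a) w kA (ms ! (length ms - Suc j)) ! j else replicate w 0) [0..<Suc a]). length x = w"
  by (auto simp: benc_block_length)

lemma src_enc_blk:
  assumes "l \<le> a"
  shows "blk w l (src_enc p a w kA ms) = (if l < length ms
      then benc p (Suc a) w kA (ms ! (length ms - Suc l)) ! l else replicate w 0)"
  unfolding blk_def src_enc_def using blk_concat[OF src_enc_blocks] assms
  by (simp del: upt_Suc)

lemma src_enc_vecs:
  assumes "p > 0" shows "src_enc p a w kA ms \<in> vecs (gfp p) (Suc a * w)"
proof -
  have "\<forall>x\<in>set (map (\<lambda>j. if j < length ms
      then benc p (Suc a) w kA (ms ! (length ms - Suc j)) ! j else replicate w 0) [0..<Suc a]). set x \<subseteq> {0..<p}"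
  proof
    fix x assume "x \<in> set (map (\<lambda>j. if j < length ms
      then benc p (Suc a) w kA (ms ! (length ms - Suc j)) ! j else replicate w 0) [0..<Suc a])"
    then obtain j where j: "j < Suc a" "x = (if j < length ms
      then benc p (Suc a) w kA (ms ! (length ms - Suc j)) ! j else replicate w 0)"
      by (auto simp del: upt_Suc)
    show "set x \<subseteq> {0..<p}"
    proof (cases "j < length ms")
      case True
      then have "x = benc p (Suc a) w kA (ms ! (length ms - Suc j)) ! j" using j by simp
      then show ?thesis using benc_block_set[OF assms j(1), of w kA "ms ! (length ms - Suc j)"] by auto
    next
      case False
      then show ?thesis using j assms by (auto simp: set_replicate_conv_if)
    qed
  qed
  then have "set (src_enc p a w kA ms) \<subseteq> {0..<p}"
    unfolding src_enc_def by auto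
  moreover have "length (src_enc p a w kA ms) = Suc a * w"
    unfolding src_enc_def using length_concat_const[OF src_enc_blocks] by (simp del: upt_Suc)
  ultimately show ?thesis by (simp add: vecs_def gfp_def)
qed

definition relay_part :: "nat \<Rightarrow> nat \<Rightarrow> nat \<Rightarrow> nat \<Rightarrow> nat \<Rightarrow> nat \<Rightarrow> nat \<Rightarrow> (rx \<times> rx \<Rightarrow> rx)
    \<Rightarrow> (rx \<times> rx) option list \<Rightarrow> nat list" where
  "relay_part p a b w kA v kB sel W = concat (map (\<lambda>i. case W ! (b - i) of None \<Rightarrow> replicate v 0
     | Some _ \<Rightarrow> benc p (Suc b) v kB (bdec p (Suc a) w kA
         (map (\<lambda>l. case W ! (b - i + l) of None \<Rightarrow> None | Some pr \<Rightarrow> map_option (blk w l) (sel pr))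
            [0..<Suc a])) ! i) [0..<Suc b])"

lemma relay_part_blocks:
  "\<forall>x\<in>set (map (\<lambda>i. case W ! (b - i) of None \<Rightarrow> replicate v 0
     | Some _ \<Rightarrow> benc p (Suc b) v kB (bdec p (Suc a) w kA
         (map (\<lambda>l. case W ! (b - i + l) of None \<Rightarrow> None | Some pr \<Rightarrow> map_option (blk w l) (sel pr))
            [0..<Suc a])) ! i) [0..<Suc b]). length x = v"
  by (auto simp: benc_block_length split: option.splits)

lemma relay_part_blk:
  assumes "i \<le> b"
  shows "blk v i (relay_part p a b w kA v kB sel W) = (case W ! (b - i) of None \<Rightarrow> replicate v 0
     | Some _ \<Rightarrow> benc p (Suc b) v kB (bdec p (Suc a) w kA
         (map (\<lambda>l. case W ! (b - i + l) of None \<Rightarrow> None | Some pr \<Rightarrow> map_option (blk w l) (sel pr))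
            [0..<Suc a])) ! i)"
proof -
  have "blk v i (relay_part p a b w kA v kB sel W) = map (\<lambda>i. case W ! (b - i) of None \<Rightarrow> replicate v 0
     | Some _ \<Rightarrow> benc p (Suc b) v kB (bdec p (Suc a) w kA
         (map (\<lambda>l. case W ! (b - i + l) of None \<Rightarrow> None | Some pr \<Rightarrow> map_option (blk w l) (sel pr))
            [0..<Suc a])) ! i) [0..<Suc b] ! i"
    unfolding blk_def[of v i] relay_part_def
    by (rule blk_concat[OF relay_part_blocks]) (use assms in simp)
  also have "... = (case W ! (b - i) of None \<Rightarrow> replicate v 0
     | Some _ \<Rightarrow> benc p (Suc b) v kB (bdec p (Suc a) w kA
         (map (\<lambda>l. case W ! (b - i + l) of None \<Rightarrow> None | Some pr \<Rightarrow> map_option (blk w l) (sel pr))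
            [0..<Suc a])) ! i)"
  proof -
    have e: "[0..<Suc b] ! i = i" using assms by (simp del: upt_Suc)
    have il: "i < length [0..<Suc b]" using assms by (simp del: upt_Suc)
    show ?thesis by (simp only: nth_map[OF il] e)
  qed
  finally show ?thesis .
qed

lemma relay_part_len: "length (relay_part p a b w kA v kB sel W) = Suc b * v"
  unfolding relay_part_def using length_concat_const[OF relay_part_blocks] by (simp del: upt_Suc)

lemma relay_part_set:
  assumes "p > 0" shows "set (relay_part p a b w kA v kB sel W) \<subseteq> {0..<p}"
proof -
  let ?f = "(\<lambda>i. case W ! (b - i) of None \<Rightarrow> replicate v 0
     | Some _ \<Rightarrow> benc p (Suc b) v kB (bdec p (Suc a) w kA
         (map (\<lambda>l. case W ! (b - i + l) of None \<Rightarrow> None | Some pr \<Rightarrow> map_option (blk w l) (sel pr))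
            [0..<Suc a])) ! i)"
  have "\<forall>x\<in>set (map ?f [0..<Suc b]). set x \<subseteq> {0..<p}"
  proof
    fix x assume "x \<in> set (map ?f [0..<Suc b])"
    then obtain j where j: "j < Suc b" "x = ?f j"
      by (auto simp del: upt_Suc)
    show "set x \<subseteq> {0..<p}"
    proof (cases "W ! (b - j)")
      case None
      then show ?thesis using j assms by (auto simp: set_replicate_conv_if)
    next
      case (Some pr)
      then have "\<exists>c. x = benc p (Suc b) v kB c ! j" using j by (simp del: upt_Suc, blast)
      then obtain c where "x = benc p (Suc b) v kB c ! j" by blast
      then show ?thesis using benc_block_set[OF assms j(1), of v kB c] by auto
    qed
  qed
  then show ?thesis unfolding relay_part_def by auto
qed

definition dest_part :: "nat \<Rightarrow> nat \<Rightarrow> nat \<Rightarrow> nat \<Rightarrow> nat \<Rightarrow> nat \<Rightarrow> rx list \<Rightarrow> nat list" where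
  "dest_part p a b v kB off ys = bdec p (Suc b) v kB
     (map (\<lambda>i. map_option (\<lambda>pk. blk v i (drop off pk)) (ys ! (length ys - Suc (a + b) + a + i))) [0..<Suc b])"

lemma relay_ok:
  assumes p: "prime p" "Suc a \<le> p"
    and K: "K = kA * w" and kA: "kA + N \<le> Suc a"
    and s: "\<forall>t. s t \<in> vecs (gfp p) K" and E: "finite E" "card E = N"
    and WW: "\<forall>j \<le> a + b. W ! j = (if a + b \<le> t + j then Some (Y (t + j - (a + b))) else None)"
    and sel: "\<forall>\<tau>. sel (Y \<tau>) = src_rx (src_enc p a w kA) s E \<tau>"
    and i: "i \<le> b" "a + i \<le> t"
  shows "blk v i (relay_part p a b w kA v kB sel W) = benc p (Suc b) v kB (s (t - a - i)) ! i"
proof -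
  define u where "u = t - a - i"
  have e1: "t + (b - i) - (a + b) = u" using i unfolding u_def by arith
  have Wb: "W ! (b - i) = Some (Y u)" using WW[rule_format, of "b - i"] i e1 by simp
  define rs where "rs = map (\<lambda>l. case W ! (b - i + l) of None \<Rightarrow> None
      | Some pr \<Rightarrow> map_option (blk w l) (sel pr)) [0..<Suc a]"
  have rsl: "rs ! l = (if u + l \<in> E then None else Some (benc p (Suc a) w kA (s u) ! l))"
    if l: "l < Suc a" for l
  proof -
    have e2: "t + (b - i + l) - (a + b) = u + l" using i l unfolding u_def by arith
    have "W ! (b - i + l) = Some (Y (u + l))" using WW[rule_format, of "b - i + l"] i l e2 by simp
    then have "rs ! l = map_option (blk w l) (src_rx (src_enc p a w kA) s E (u + l))"
      using l sel unfolding rs_def by (simp del: upt_Suc)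
    also have "... = (if u + l \<in> E then None
        else Some (blk w l (src_enc p a w kA (map s [0..<Suc (u + l)]))))"
      by (simp add: src_rx_def del: upt_Suc)
    also have "blk w l (src_enc p a w kA (map s [0..<Suc (u + l)])) = benc p (Suc a) w kA (s u) ! l"
    proof -
      have "map s [0..<Suc (u + l)] ! u = s u" by (simp del: upt_Suc)
      then show ?thesis using src_enc_blk[of l a w p kA "map s [0..<Suc (u + l)]"] l
        by (simp del: upt_Suc)
    qed
    finally show ?thesis .
  qed
  have su: "length (s u) = kA * w" "set (s u) \<subseteq> {..<p}" using s[rule_format, of u] K
    by (auto simp: vecs_def gfp_def)
  have dec: "bdec p (Suc a) w kA rs = s u"
  proof (rule bdec_correct[OF p su])
    show "\<forall>j<Suc a. rs ! j = None \<or> rs ! j = Some (benc p (Suc a) w kA (s u) ! j)" using rsl by simp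
    have "{j. j < Suc a \<and> rs ! j \<noteq> None} = {j. j < Suc a \<and> u + j \<notin> E}" using rsl by auto
    then show "kA \<le> card {j. j < Suc a \<and> rs ! j \<noteq> None}"
      using erasure_count[OF E, of "Suc a" u] kA by simp
  qed
  show ?thesis using relay_part_blk[OF i(1), where p=p and a=a and w=w and kA=kA and v=v and kB=kB and sel=sel and W=W] Wb dec unfolding rs_def u_def
    by (simp del: upt_Suc)
qed

lemma dest_ok:
  assumes p: "prime p" "Suc b \<le> p" and K: "K = kB * v" and kB: "kB + M \<le> Suc b"
    and st: "s t \<in> vecs (gfp p) K" and E: "finite E3" "card E3 = M"
    and X: "\<forall>i \<le> b. blk v i (drop off (X (t + a + i))) = benc p (Suc b) v kB (s t) ! i"
  shows "dest_part p a b v kB off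
     (map (\<lambda>\<tau>. if \<tau> \<in> E3 then None else Some (X \<tau>)) [0..<Suc (t + (a + b))]) = s t"
proof -
  define ys where "ys = map (\<lambda>\<tau>. if \<tau> \<in> E3 then None else Some (X \<tau>)) [0..<Suc (t + (a + b))]"
  have len: "length ys - Suc (a + b) = t" unfolding ys_def by simp
  define rs where "rs = map (\<lambda>i. map_option (\<lambda>pk. blk v i (drop off pk)) (ys ! (t + a + i))) [0..<Suc b]"
  have rsl: "rs ! i = (if t + a + i \<in> E3 then None else Some (benc p (Suc b) v kB (s t) ! i))"
    if i: "i < Suc b" for i
  proof -
    have "ys ! (t + a + i) = (if t + a + i \<in> E3 then None else Some (X (t + a + i)))"
      unfolding ys_def using i by (simp del: upt_Suc)
    then show ?thesis unfolding rs_def using i X by (simp del: upt_Suc)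
  qed
  have st2: "length (s t) = kB * v" "set (s t) \<subseteq> {..<p}" using st K
    by (auto simp: vecs_def gfp_def)
  have "dest_part p a b v kB off ys = bdec p (Suc b) v kB rs"
    unfolding dest_part_def rs_def len ..
  also have "... = s t"
  proof (rule bdec_correct[OF p st2])
    show "\<forall>j<Suc b. rs ! j = None \<or> rs ! j = Some (benc p (Suc b) v kB (s t) ! j)" using rsl by simp
    have "{j. j < Suc b \<and> rs ! j \<noteq> None} = {j. j < Suc b \<and> (t + a) + j \<notin> E3}" using rsl by auto
    then show "kB \<le> card {j. j < Suc b \<and> rs ! j \<noteq> None}"
      using erasure_count[OF E, of "Suc b" "t + a"] kB by simp
  qed
  finally show ?thesis unfolding ys_def .
qed

lemma relay_hist_len: "length (relay_hist g T W t) = t"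
  by (induction t) auto

lemma relay_hist_nth: "relay_hist g T W (Suc t) ! t = g (W t) (map snd (drop T (relay_hist g T W t)))"
  by (simp add: nth_append relay_hist_len)

lemma blk_append1:
  assumes "length xs = Suc b * v" "i \<le> b"
  shows "blk v i (xs @ ys) = blk v i xs"
proof -
  have "i * v + v \<le> length xs" using assms mult_le_mono1[of "Suc i" "Suc b" v] by simp
  then show ?thesis unfolding blk_def by (simp add: take_append min_def)
qed

lemma relay_window_nth:
  assumes "j \<le> T"
  shows "relay_window T y1 y2 t ! j = (if T \<le> t + j then Some (y1 (t + j - T), y2 (t + j - T)) else None)"
  using assms unfolding relay_window_def by (simp del: upt_Suc)

lemma main_construct:
  assumes p: "prime p"
    and ab1: "a1 + b1 = T" "Suc a1 \<le> p" "Suc b1 \<le> p" "K1 = kA1 * w1" "K1 = kB1 * v1"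
      "kA1 + N1 \<le> Suc a1" "kB1 + N3 \<le> Suc b1"
    and ab2: "a2 + b2 = T" "Suc a2 \<le> p" "Suc b2 \<le> p" "K2 = kA2 * w2" "K2 = kB2 * v2"
      "kA2 + N2 \<le> Suc a2" "kB2 + N3 \<le> Suc b2"
  shows "achievable_code (gfp p) (Suc a1 * w1) (Suc a2 * w2) (Suc b1 * v1 + Suc b2 * v2) K1 K2 T
     (src_enc p a1 w1 kA1) (src_enc p a2 w2 kA2)
     (\<lambda>W es. (relay_part p a1 b1 w1 kA1 v1 kB1 fst W @ relay_part p a2 b2 w2 kA2 v2 kB2 snd W, [], []))
     (\<lambda>ys. (dest_part p a1 b1 v1 kB1 0 ys, dest_part p a2 b2 v2 kB2 (Suc b1 * v1) ys)) N1 N2 N3"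
proof -
  have p0: "p > 0" using p prime_gt_0_nat by blast
  let ?enc1 = "src_enc p a1 w1 kA1" and ?enc2 = "src_enc p a2 w2 kA2"
  let ?P1 = "relay_part p a1 b1 w1 kA1 v1 kB1 fst" and ?P2 = "relay_part p a2 b2 w2 kA2 v2 kB2 snd"
  let ?g = "\<lambda>W es. (?P1 W @ ?P2 W, [] :: nat list, [] :: nat list)"
  have G: "fst (?g W es) \<in> vecs (gfp p) (Suc b1 * v1 + Suc b2 * v2)" for W es
    using relay_part_len[of p a1 b1 w1 kA1 v1 kB1 fst W] relay_part_len[of p a2 b2 w2 kA2 v2 kB2 snd W]
      relay_part_set[OF p0, of a1 b1 w1 kA1 v1 kB1 fst W] relay_part_set[OF p0, of a2 b2 w2 kA2 v2 kB2 snd W]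
    by (auto simp: vecs_def gfp_def)
  have M: "dest_part p a1 b1 v1 kB1 0 (map (\<lambda>\<tau>. if \<tau> \<in> E3 then None
          else Some (fst (relay_hist ?g T (relay_window T (src_rx ?enc1 s1 E1) (src_rx ?enc2 s2 E2)) (Suc \<tau>) ! \<tau>))) [0..<Suc (t + T)]) = s1 t \<and>
        dest_part p a2 b2 v2 kB2 (Suc b1 * v1) (map (\<lambda>\<tau>. if \<tau> \<in> E3 then None
          else Some (fst (relay_hist ?g T (relay_window T (src_rx ?enc1 s1 E1) (src_rx ?enc2 s2 E2)) (Suc \<tau>) ! \<tau>))) [0..<Suc (t + T)]) = s2 t"
    if s1: "\<forall>t. s1 t \<in> vecs (gfp p) K1" and s2: "\<forall>t. s2 t \<in> vecs (gfp p) K2"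
      and E1: "finite E1" "card E1 = N1" and E2: "finite E2" "card E2 = N2"
      and E3: "finite E3" "card E3 = N3"
    for s1 s2 E1 E2 E3 t
  proof -
    define W where "W = relay_window T (src_rx ?enc1 s1 E1) (src_rx ?enc2 s2 E2)"
    define x2 where "x2 = (\<lambda>\<tau>. fst (relay_hist ?g T W (Suc \<tau>) ! \<tau>))"
    note x2 = x2_def and W = W_def
    have x2e: "x2 \<tau> = ?P1 (W \<tau>) @ ?P2 (W \<tau>)" for \<tau>
      unfolding x2 relay_hist_nth by simp
    define Y where "Y = (\<lambda>\<tau>. (src_rx ?enc1 s1 E1 \<tau>, src_rx ?enc2 s2 E2 \<tau>))"
    have WW1: "\<forall>j \<le> a1 + b1. W \<tau> ! j = (if a1 + b1 \<le> \<tau> + j then Some (Y (\<tau> + j - (a1 + b1))) else None)" for \<tau>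
      using ab1(1) unfolding W Y_def by (auto simp: relay_window_nth)
    have WW2: "\<forall>j \<le> a2 + b2. W \<tau> ! j = (if a2 + b2 \<le> \<tau> + j then Some (Y (\<tau> + j - (a2 + b2))) else None)" for \<tau>
      using ab2(1) unfolding W Y_def by (auto simp: relay_window_nth)
    have sel1: "\<forall>\<tau>. fst (Y \<tau>) = src_rx ?enc1 s1 E1 \<tau>" unfolding Y_def by simp
    have sel2: "\<forall>\<tau>. snd (Y \<tau>) = src_rx ?enc2 s2 E2 \<tau>" unfolding Y_def by simp
    have D1: "dest_part p a1 b1 v1 kB1 0
        (map (\<lambda>\<tau>. if \<tau> \<in> E3 then None else Some (x2 \<tau>)) [0..<Suc (t + (a1 + b1))]) = s1 t"
    proof (rule dest_ok[OF p ab1(3) ab1(5) ab1(7) s1[rule_format] E3])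
      show "\<forall>i\<le>b1. blk v1 i (drop 0 (x2 (t + a1 + i))) = benc p (Suc b1) v1 kB1 (s1 t) ! i"
      proof (intro allI impI)
        fix i assume i: "i \<le> b1"
        have "blk v1 i (drop 0 (x2 (t + a1 + i))) = blk v1 i (?P1 (W (t + a1 + i)))"
          unfolding x2e using blk_append1[OF relay_part_len i] by simp
        also have "... = benc p (Suc b1) v1 kB1 (s1 (t + a1 + i - a1 - i)) ! i"
          by (rule relay_ok[OF p ab1(2) ab1(4) ab1(6) s1 E1 WW1 sel1 i]) simp
        finally show "blk v1 i (drop 0 (x2 (t + a1 + i))) = benc p (Suc b1) v1 kB1 (s1 t) ! i" by simp
      qed
    qed
    have D2: "dest_part p a2 b2 v2 kB2 (Suc b1 * v1)
        (map (\<lambda>\<tau>. if \<tau> \<in> E3 then None else Some (x2 \<tau>)) [0..<Suc (t + (a2 + b2))]) = s2 t"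
    proof (rule dest_ok[OF p ab2(3) ab2(5) ab2(7) s2[rule_format] E3])
      show "\<forall>i\<le>b2. blk v2 i (drop (Suc b1 * v1) (x2 (t + a2 + i))) = benc p (Suc b2) v2 kB2 (s2 t) ! i"
      proof (intro allI impI)
        fix i assume i: "i \<le> b2"
        have "blk v2 i (drop (Suc b1 * v1) (x2 (t + a2 + i))) = blk v2 i (?P2 (W (t + a2 + i)))"
          unfolding x2e using relay_part_len[of p a1 b1 w1 kA1 v1 kB1 fst "W (t + a2 + i)"] by simp
        also have "... = benc p (Suc b2) v2 kB2 (s2 (t + a2 + i - a2 - i)) ! i"
          by (rule relay_ok[OF p ab2(2) ab2(4) ab2(6) s2 E2 WW2 sel2 i]) simp
        finally show "blk v2 i (drop (Suc b1 * v1) (x2 (t + a2 + i))) = benc p (Suc b2) v2 kB2 (s2 t) ! i" by simp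
      qed
    qed
    show ?thesis using D1 D2 ab1(1) ab2(1) unfolding x2_def W_def by simp
  qed
  show ?thesis
    unfolding achievable_code_def Let_def
  proof (intro conjI allI impI)
    show "\<And>ms. ?enc1 ms \<in> vecs (gfp p) (Suc a1 * w1)" using src_enc_vecs[OF p0] .
    show "\<And>ms. ?enc2 ms \<in> vecs (gfp p) (Suc a2 * w2)" using src_enc_vecs[OF p0] .
    show "\<And>W es. fst (?g W es) \<in> vecs (gfp p) (Suc b1 * v1 + Suc b2 * v2)" using G .
  next
    fix s1 s2 :: "nat \<Rightarrow> nat list" and E1 E2 E3 :: "nat set" and t :: nat
    assume "\<forall>t. s1 t \<in> vecs (gfp p) K1" "\<forall>t. s2 t \<in> vecs (gfp p) K2" "finite E1" "card E1 = N1"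
      "finite E2" "card E2 = N2" "finite E3" "card E3 = N3"
    from M[OF this, of t]
    show "(dest_part p a1 b1 v1 kB1 0 (map (\<lambda>\<tau>. if \<tau> \<in> E3 then None
          else Some (fst (relay_hist ?g T (relay_window T (src_rx ?enc1 s1 E1) (src_rx ?enc2 s2 E2)) (Suc \<tau>) ! \<tau>))) [0..<Suc (t + T)]),
        dest_part p a2 b2 v2 kB2 (Suc b1 * v1) (map (\<lambda>\<tau>. if \<tau> \<in> E3 then None
          else Some (fst (relay_hist ?g T (relay_window T (src_rx ?enc1 s1 E1) (src_rx ?enc2 s2 E2)) (Suc \<tau>) ! \<tau>))) [0..<Suc (t + T)])) =
       (s1 t, s2 t)" by simp
  qed
qed

theorem lemma8:
  fixes N1 N2 N3 T T1 T2 A B :: nat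
  assumes "N1 \<ge> N2" and "T \<ge> N1 + N3"
    and "is_tmax T N1 N3 T1" and "is_tmax T N2 N3 T2"
    and "A > 0" and "B > 0"
  shows "achievable_rate_pair N1 N2 N3 T
     (real (A * (T - T1 + 1 - N3) * (T1 + 1 - N1)) /
        real (max (A * (T1 + 1) * (T - T1 + 1 - N3))
               (max (B * (T2 + 1) * (T - T2 + 1 - N3))
                    (A * (T - T1 + 1) * (T1 + 1 - N1) + B * (T - T2 + 1) * (T2 + 1 - N2)))))
     (real (B * (T - T2 + 1 - N3) * (T2 + 1 - N2)) /
        real (max (A * (T1 + 1) * (T - T1 + 1 - N3))
               (max (B * (T2 + 1) * (T - T2 + 1 - N3))
                    (A * (T - T1 + 1) * (T1 + 1 - N1) + B * (T - T2 + 1) * (T2 + 1 - N2)))))"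
proof -
  have T1: "N1 \<le> T1" "T1 \<le> T - N3" using assms(3) by (auto simp: is_tmax_def)
  have T2: "N2 \<le> T2" "T2 \<le> T - N3" using assms(4) by (auto simp: is_tmax_def)
  have TN: "N3 \<le> T" "N1 \<le> T" using assms(2) by auto
  obtain p where p: "prime p" "T + 1 < p" using bigger_prime by blast
  define K1 where "K1 = A * (T - T1 + 1 - N3) * (T1 + 1 - N1)"
  define K2 where "K2 = B * (T - T2 + 1 - N3) * (T2 + 1 - N2)"
  have AC: "achievable_code (gfp p) (Suc T1 * (A * (T - T1 + 1 - N3))) (Suc T2 * (B * (T - T2 + 1 - N3)))
     (Suc (T - T1) * (A * (T1 + 1 - N1)) + Suc (T - T2) * (B * (T2 + 1 - N2))) K1 K2 T
     (src_enc p T1 (A * (T - T1 + 1 - N3)) (T1 + 1 - N1)) (src_enc p T2 (B * (T - T2 + 1 - N3)) (T2 + 1 - N2))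
     (\<lambda>W es. (relay_part p T1 (T - T1) (A * (T - T1 + 1 - N3)) (T1 + 1 - N1) (A * (T1 + 1 - N1)) (T - T1 + 1 - N3) fst W
        @ relay_part p T2 (T - T2) (B * (T - T2 + 1 - N3)) (T2 + 1 - N2) (B * (T2 + 1 - N2)) (T - T2 + 1 - N3) snd W, [], []))
     (\<lambda>ys. (dest_part p T1 (T - T1) (A * (T1 + 1 - N1)) (T - T1 + 1 - N3) 0 ys,
        dest_part p T2 (T - T2) (B * (T2 + 1 - N2)) (T - T2 + 1 - N3) (Suc (T - T1) * (A * (T1 + 1 - N1))) ys))
     N1 N2 N3"
  proof (rule main_construct[OF p(1)])
    show "T1 + (T - T1) = T" "T2 + (T - T2) = T" using T1 T2 TN by arith+
    show "Suc T1 \<le> p" "Suc (T - T1) \<le> p" "Suc T2 \<le> p" "Suc (T - T2) \<le> p" using T1 T2 p(2) by arith+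
    show "K1 = (T1 + 1 - N1) * (A * (T - T1 + 1 - N3))" "K1 = (T - T1 + 1 - N3) * (A * (T1 + 1 - N1))"
      unfolding K1_def by (simp_all add: ac_simps)
    show "K2 = (T2 + 1 - N2) * (B * (T - T2 + 1 - N3))" "K2 = (T - T2 + 1 - N3) * (B * (T2 + 1 - N2))"
      unfolding K2_def by (simp_all add: ac_simps)
    show "T1 + 1 - N1 + N1 \<le> Suc T1" "T - T1 + 1 - N3 + N3 \<le> Suc (T - T1)"
      "T2 + 1 - N2 + N2 \<le> Suc T2" "T - T2 + 1 - N3 + N3 \<le> Suc (T - T2)"
      using T1 T2 TN by arith+
  qed
  have e1: "\<And>X. Suc T1 * (A * X) = A * (T1 + 1) * X" by (simp add: algebra_simps)
  have e2: "\<And>X. Suc T2 * (B * X) = B * (T2 + 1) * X" by (simp add: algebra_simps)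
  have e3: "\<And>X Y. Suc (T - T1) * (A * X) + Suc (T - T2) * (B * Y) =
      A * (T - T1 + 1) * X + B * (T - T2 + 1) * Y" by (simp add: algebra_simps)
  note AC' = AC[unfolded e1 e2 e3]
  have fld: "field (gfp p)" using gfp_field[OF p(1)] .
  have fin: "finite (carrier (gfp p))" by (simp add: gfp_def)
  show ?thesis unfolding achievable_rate_pair_def
    apply (intro exI conjI)
    apply (rule fld)
    apply (rule fin)
    apply (rule AC')
    apply (simp add: K1_def)
    apply (simp add: K2_def)
    done
qed

end
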